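(* Let $m,n\in\mathbb{N}$ and let $G=K_{1,m,n}$ be the complete tripartite graph with parts of sizes $1,m,n$. Then: (1) if $m=1$, $G$ is an $\mathcal{N}$ position for Grim if and only if $n$ is even; (2) if $m=2$ and $n\geq 2$, $G$ is an $\mathcal{N}$ position; (3) if $m,n\geq 3$, $G$ is an $\mathcal{N}$ position if and only if $m+n$ is even.
   Context: Grim is a two-player game on a finite simple undirected graph. Any isolated vertices of the starting graph are deleted before play begins. Players alternate moves; a move consists of selecting a vertex of the current graph and deleting it together with all its incident edges, after which every vertex that has become isolated is also deleted. The player who makes the last legal move wins (a player facing the empty graph has no move and loses). A graph is an $\mathcal{N}$ position if the player about to move has a winning strategy, and a $\mathcal{P}$ position otherwise. *)

theory Defs
  imports Main
begin

text \<open>A finite simple graph is represented by a vertex set V and a set E of edges,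
each edge being a 2-element subset of V.\<close>

type_synonym 'a graph = "'a set \<times> 'a set set"

definition simple_graph :: "'a graph \<Rightarrow> bool" where
  "simple_graph G \<longleftrightarrow> finite (fst G) \<and> (\<forall>e\<in>snd G. card e = 2 \<and> e \<subseteq> fst G)"

definition del_isolated :: "'a graph \<Rightarrow> 'a graph" where
  "del_isolated G = ({x\<in>fst G. \<exists>e\<in>snd G. x \<in> e}, snd G)"

definition grim_move :: "'a graph \<Rightarrow> 'a \<Rightarrow> 'a graph" where
  "grim_move G v = del_isolated (fst G - {v}, {e\<in>snd G. v \<notin> e})"

text \<open>grim_win G: the player about to move from G has a winning strategy
  (normal play: the player with no legal move loses).\<close>
function grim_win :: "'a graph \<Rightarrow> bool" where
  "grim_win (V, E) = (if finite V then (\<exists>v\<in>V. \<not> grim_win (grim_move (V, E) v)) else False)"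
  by pat_completeness auto
termination
proof (relation "measure (\<lambda>(V, E). card V)")
  fix V :: "'a set" and E v
  assume "finite V" "v \<in> V"
  then show "(grim_move (V, E) v, V, E) \<in> measure (\<lambda>(V, E). card V)"
    unfolding grim_move_def del_isolated_def
    by (auto intro!: psubset_card_mono)
qed auto

text \<open>A graph is an N position for Grim if the first player wins the game played
  on it after the isolated vertices of the starting graph are deleted.\<close>
definition grim_N :: "'a graph \<Rightarrow> bool" where
  "grim_N G \<longleftrightarrow> grim_win (del_isolated G)"

definition K3 :: "nat \<Rightarrow> nat \<Rightarrow> nat \<Rightarrow> (nat \<times> nat) graph" where
  "K3 a b c =
    (let V = {(0, j) | j. j < a} \<union> {(1, j) | j. j < b} \<union> {(2, j) | j. j < c}
     in (V, {{x, y} | x y. x \<in> V \<and> y \<in> V \<and> fst x \<noteq> fst y}))"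

end

theory Submission
  imports Defs
begin

definition W :: "nat \<Rightarrow> nat \<Rightarrow> nat \<Rightarrow> bool" where
"W a b c = (if a = 0 then (if b = 0 \<or> c = 0 then False else if b = 1 \<or> c = 1 then True else odd (b+c))
  else (if b = 0 \<and> c = 0 then False else if b = 0 \<or> c = 0 then True else if b = 1 then even c
        else if c = 1 then even b else if b = 2 \<or> c = 2 then True else even (b+c)))"

lemma W_rec: "a \<le> 1 \<Longrightarrow> W a b c = (((a>0 \<and> b>0) \<or> (a>0 \<and> c>0) \<or> (b>0 \<and> c>0)) \<and>
   ((a>0 \<and> \<not> W (a-1) b c) \<or> (b>0 \<and> \<not> W a (b-1) c) \<or> (c>0 \<and> \<not> W a b (c-1))))"
proof -
  assume "a \<le> 1"
  then have "a = 0 \<or> a = 1" by auto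
  moreover have "b = 0 \<or> b = 1 \<or> b = 2 \<or> b = 3 \<or> (\<exists>k. b = k + 4)" by presburger
  moreover have "c = 0 \<or> c = 1 \<or> c = 2 \<or> c = 3 \<or> (\<exists>k. c = k + 4)" by presburger
  ultimately show ?thesis
    by (elim disjE exE; simp add: W_def)
qed


definition Gr :: "nat set \<Rightarrow> nat set \<Rightarrow> nat set \<Rightarrow> (nat \<times> nat) graph" where
 "Gr A B C = (let V = ({0::nat} \<times> A) \<union> ({1} \<times> B) \<union> ({2} \<times> C)
     in (V, {{x, y} | x y. x \<in> V \<and> y \<in> V \<and> fst x \<noteq> fst y}))"

lemma K3_Gr: "K3 a b c = Gr {..<a} {..<b} {..<c}"
  unfolding K3_def Gr_def Let_def by auto

lemma grim_win_eq: "grim_win H = (finite (fst H) \<and> (\<exists>v\<in>fst H. \<not> grim_win (grim_move H v)))"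
  by (cases H) simp

lemma move_del: "grim_move (del_isolated G) v = del_isolated (fst G - {v}, {e\<in>snd G. v \<notin> e})"
  unfolding grim_move_def del_isolated_def by auto

definition ok2 :: "nat set \<Rightarrow> nat set \<Rightarrow> nat set \<Rightarrow> bool" where
 "ok2 A B C = ((A \<noteq> {} \<and> B \<noteq> {}) \<or> (A \<noteq> {} \<and> C \<noteq> {}) \<or> (B \<noteq> {} \<and> C \<noteq> {}))"

lemma rm0: "fst (Gr A B C) - {(0,j)} = fst (Gr (A-{j}) B C)"
  unfolding Gr_def Let_def by auto
lemma rm1: "fst (Gr A B C) - {(1,j)} = fst (Gr A (B-{j}) C)"
  unfolding Gr_def Let_def by auto
lemma rm2: "fst (Gr A B C) - {(2,j)} = fst (Gr A B (C-{j}))"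
  unfolding Gr_def Let_def by auto

lemma sndGr: "snd (Gr A B C) = {{x, y} | x y. x \<in> fst (Gr A B C) \<and> y \<in> fst (Gr A B C) \<and> fst x \<noteq> fst y}"
  unfolding Gr_def Let_def by simp

lemma rm_edges: "{e\<in>snd (Gr A B C). v \<notin> e} = {{x, y} | x y. x \<in> fst (Gr A B C) - {v} \<and> y \<in> fst (Gr A B C) - {v} \<and> fst x \<noteq> fst y}"
  unfolding sndGr by blast

lemma Gr_pair: "Gr A B C = (fst (Gr A B C), {{x, y} | x y. x \<in> fst (Gr A B C) \<and> y \<in> fst (Gr A B C) \<and> fst x \<noteq> fst y})"
  using sndGr by (metis prod.collapse)

lemma mv0: "(fst (Gr A B C) - {(0,j)}, {e\<in>snd (Gr A B C). (0,j) \<notin> e}) = Gr (A-{j}) B C"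
  unfolding rm_edges rm0 by (rule Gr_pair[symmetric])
lemma mv1: "(fst (Gr A B C) - {(1,j)}, {e\<in>snd (Gr A B C). (1,j) \<notin> e}) = Gr A (B-{j}) C"
  unfolding rm_edges rm1 by (rule Gr_pair[symmetric])
lemma mv2: "(fst (Gr A B C) - {(2,j)}, {e\<in>snd (Gr A B C). (2,j) \<notin> e}) = Gr A B (C-{j})"
  unfolding rm_edges rm2 by (rule Gr_pair[symmetric])

lemma fstGr: "fst (Gr A B C) = ({0::nat} \<times> A) \<union> ({1} \<times> B) \<union> ({2} \<times> C)"
  unfolding Gr_def Let_def by simp

lemma nonisol: "x \<in> fst (Gr A B C) \<Longrightarrow> (\<exists>e\<in>snd (Gr A B C). x\<in>e) \<longleftrightarrow> (\<exists>y\<in>fst (Gr A B C). fst y \<noteq> fst x)"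
proof
  assume "\<exists>e\<in>snd (Gr A B C). x\<in>e"
  then obtain u w where "u \<in> fst (Gr A B C)" "w \<in> fst (Gr A B C)" "fst u \<noteq> fst w" "x \<in> {u,w}"
    unfolding sndGr by blast
  then show "\<exists>y\<in>fst (Gr A B C). fst y \<noteq> fst x" by (metis insertE singletonD)
next
  assume x: "x \<in> fst (Gr A B C)" and "\<exists>y\<in>fst (Gr A B C). fst y \<noteq> fst x"
  then obtain y where "y \<in> fst (Gr A B C)" "fst y \<noteq> fst x" by blast
  then have "{x,y} \<in> snd (Gr A B C)" using x unfolding sndGr by blast
  then show "\<exists>e\<in>snd (Gr A B C). x\<in>e" by blast
qed

lemma inA: "a \<in> A \<Longrightarrow> (0,a) \<in> fst (Gr A B C)" unfolding fstGr by blast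
lemma inB: "b \<in> B \<Longrightarrow> (1,b) \<in> fst (Gr A B C)" unfolding fstGr by blast
lemma inC: "c \<in> C \<Longrightarrow> (2,c) \<in> fst (Gr A B C)" unfolding fstGr by blast
lemma wit: "y \<in> S \<Longrightarrow> fst y \<noteq> k \<Longrightarrow> \<exists>y\<in>S. fst y \<noteq> k" by blast

lemma nonisol2: "x \<in> fst (Gr A B C) \<Longrightarrow> (\<exists>y\<in>fst (Gr A B C). fst y \<noteq> fst x) \<longleftrightarrow> ok2 A B C"
proof
  assume x: "x \<in> fst (Gr A B C)" and "\<exists>y\<in>fst (Gr A B C). fst y \<noteq> fst x"
  then obtain y where y: "y \<in> fst (Gr A B C)" "fst y \<noteq> fst x" by blast
  have "x \<in> {0} \<times> A \<or> x \<in> {1} \<times> B \<or> x \<in> {2} \<times> C" using x unfolding fstGr by blast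
  moreover have "y \<in> {0} \<times> A \<or> y \<in> {1} \<times> B \<or> y \<in> {2} \<times> C" using y unfolding fstGr by blast
  ultimately show "ok2 A B C" using y(2) unfolding ok2_def by (elim disjE) auto
next
  assume x: "x \<in> fst (Gr A B C)" and ok: "ok2 A B C"
  have o1: "B \<noteq> {} \<or> C \<noteq> {}" and o2: "A \<noteq> {} \<or> C \<noteq> {}" and o3: "A \<noteq> {} \<or> B \<noteq> {}"
    using ok unfolding ok2_def by auto
  have "x \<in> {0} \<times> A \<or> x \<in> {1} \<times> B \<or> x \<in> {2} \<times> C" using x unfolding fstGr by blast
  then show "\<exists>y\<in>fst (Gr A B C). fst y \<noteq> fst x"
  proof (elim disjE)
    assume "x \<in> {0} \<times> A"
    then have fx: "fst x = 0" by auto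
    from o1 show ?thesis
    proof
      assume "B \<noteq> {}" then obtain b where h: "b \<in> B" by blast
      show ?thesis by (rule wit[OF inB[OF h]]) (simp add: fx)
    next
      assume "C \<noteq> {}" then obtain c where h: "c \<in> C" by blast
      show ?thesis by (rule wit[OF inC[OF h]]) (simp add: fx)
    qed
  next
    assume "x \<in> {1} \<times> B"
    then have fx: "fst x = 1" by auto
    from o2 show ?thesis
    proof
      assume "A \<noteq> {}" then obtain a where h: "a \<in> A" by blast
      show ?thesis by (rule wit[OF inA[OF h]]) (simp add: fx)
    next
      assume "C \<noteq> {}" then obtain c where h: "c \<in> C" by blast
      show ?thesis by (rule wit[OF inC[OF h]]) (simp add: fx)
    qed
  next
    assume "x \<in> {2} \<times> C"
    then have fx: "fst x = 2" by auto
    from o3 show ?thesis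
    proof
      assume "A \<noteq> {}" then obtain a where h: "a \<in> A" by blast
      show ?thesis by (rule wit[OF inA[OF h]]) (simp add: fx)
    next
      assume "B \<noteq> {}" then obtain b where h: "b \<in> B" by blast
      show ?thesis by (rule wit[OF inB[OF h]]) (simp add: fx)
    qed
  qed
qed

lemma iso: assumes x: "x \<in> fst (Gr A B C)" shows "(\<exists>e\<in>snd (Gr A B C). x\<in>e) \<longleftrightarrow> ok2 A B C"
  by (simp only: nonisol[OF x] nonisol2[OF x])

lemma fst_del: "fst (del_isolated (Gr A B C)) = (if ok2 A B C then fst (Gr A B C) else {})"
proof -
  have "fst (del_isolated (Gr A B C)) = {x\<in>fst (Gr A B C). \<exists>e\<in>snd (Gr A B C). x\<in>e}"
    by (simp add: del_isolated_def)
  also have "\<dots> = {x\<in>fst (Gr A B C). ok2 A B C}"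
    by (rule Collect_cong) (metis iso)
  finally show ?thesis by (cases "ok2 A B C") simp_all
qed


lemma step0:
  assumes IH: "\<And>A'. finite A' \<Longrightarrow> card A' < card A \<Longrightarrow> grim_win (del_isolated (Gr A' B C)) = W (card A') (card B) (card C)"
    and fA: "finite A"
  shows "(\<exists>v\<in>{0}\<times>A. \<not> grim_win (grim_move (del_isolated (Gr A B C)) v)) = (card A > 0 \<and> \<not> W (card A - 1) (card B) (card C))"
proof -
  have "\<forall>j\<in>A. grim_win (grim_move (del_isolated (Gr A B C)) (0,j)) = W (card A - 1) (card B) (card C)"
  proof
    fix j assume j: "j \<in> A"
    have "grim_move (del_isolated (Gr A B C)) (0,j) = del_isolated (Gr (A-{j}) B C)"
      by (simp only: move_del mv0)
    moreover have "card (A-{j}) = card A - 1" using j fA by simp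
    moreover have "card A > 0" using j fA card_gt_0_iff by blast
    ultimately show "grim_win (grim_move (del_isolated (Gr A B C)) (0,j)) = W (card A - 1) (card B) (card C)"
      using IH[of "A-{j}"] fA by simp
  qed
  then show ?thesis using fA card_gt_0_iff by auto
qed

lemma step1:
  assumes IH: "\<And>B'. finite B' \<Longrightarrow> card B' < card B \<Longrightarrow> grim_win (del_isolated (Gr A B' C)) = W (card A) (card B') (card C)"
    and fB: "finite B"
  shows "(\<exists>v\<in>{1}\<times>B. \<not> grim_win (grim_move (del_isolated (Gr A B C)) v)) = (card B > 0 \<and> \<not> W (card A) (card B - 1) (card C))"
proof -
  have "\<forall>j\<in>B. grim_win (grim_move (del_isolated (Gr A B C)) (1,j)) = W (card A) (card B - 1) (card C)"
  proof
    fix j assume j: "j \<in> B"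
    have "grim_move (del_isolated (Gr A B C)) (1,j) = del_isolated (Gr A (B-{j}) C)"
      by (simp only: move_del mv1)
    moreover have "card (B-{j}) = card B - 1" using j fB by simp
    moreover have "card B > 0" using j fB card_gt_0_iff by blast
    ultimately show "grim_win (grim_move (del_isolated (Gr A B C)) (1,j)) = W (card A) (card B - 1) (card C)"
      using IH[of "B-{j}"] fB by simp
  qed
  then show ?thesis using fB card_gt_0_iff by auto
qed

lemma step2:
  assumes IH: "\<And>C'. finite C' \<Longrightarrow> card C' < card C \<Longrightarrow> grim_win (del_isolated (Gr A B C')) = W (card A) (card B) (card C')"
    and fC: "finite C"
  shows "(\<exists>v\<in>{2}\<times>C. \<not> grim_win (grim_move (del_isolated (Gr A B C)) v)) = (card C > 0 \<and> \<not> W (card A) (card B) (card C - 1))"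
proof -
  have "\<forall>j\<in>C. grim_win (grim_move (del_isolated (Gr A B C)) (2,j)) = W (card A) (card B) (card C - 1)"
  proof
    fix j assume j: "j \<in> C"
    have "grim_move (del_isolated (Gr A B C)) (2,j) = del_isolated (Gr A B (C-{j}))"
      by (simp only: move_del mv2)
    moreover have "card (C-{j}) = card C - 1" using j fC by simp
    moreover have "card C > 0" using j fC card_gt_0_iff by blast
    ultimately show "grim_win (grim_move (del_isolated (Gr A B C)) (2,j)) = W (card A) (card B) (card C - 1)"
      using IH[of "C-{j}"] fC by simp
  qed
  then show ?thesis using fC card_gt_0_iff by auto
qed

lemma main: "finite A \<Longrightarrow> finite B \<Longrightarrow> finite C \<Longrightarrow> card A \<le> 1 \<Longrightarrow>
  grim_win (del_isolated (Gr A B C)) = W (card A) (card B) (card C)"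
proof (induction "card A + card B + card C" arbitrary: A B C rule: less_induct)
  case less
  have fin: "finite (fst (Gr A B C))" by (simp add: fstGr less.prems)
  have gw: "grim_win (del_isolated (Gr A B C)) = (\<exists>v\<in>fst (del_isolated (Gr A B C)). \<not> grim_win (grim_move (del_isolated (Gr A B C)) v))"
    using grim_win_eq fst_del fin by (metis finite.emptyI)
  have e0: "(\<exists>v\<in>{0}\<times>A. \<not> grim_win (grim_move (del_isolated (Gr A B C)) v)) = (card A > 0 \<and> \<not> W (card A - 1) (card B) (card C))"
    by (rule step0) (use less in \<open>auto intro!: less.hyps\<close>)
  have e1: "(\<exists>v\<in>{1}\<times>B. \<not> grim_win (grim_move (del_isolated (Gr A B C)) v)) = (card B > 0 \<and> \<not> W (card A) (card B - 1) (card C))"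
    by (rule step1) (use less in \<open>auto intro!: less.hyps\<close>)
  have e2: "(\<exists>v\<in>{2}\<times>C. \<not> grim_win (grim_move (del_isolated (Gr A B C)) v)) = (card C > 0 \<and> \<not> W (card A) (card B) (card C - 1))"
    by (rule step2) (use less in \<open>auto intro!: less.hyps\<close>)
  have ok: "ok2 A B C = ((card A>0 \<and> card B>0) \<or> (card A>0 \<and> card C>0) \<or> (card B>0 \<and> card C>0))"
    unfolding ok2_def using less.prems card_gt_0_iff by blast
  show ?case
  proof (cases "ok2 A B C")
    case True
    have "grim_win (del_isolated (Gr A B C)) = (((\<exists>v\<in>{0}\<times>A. \<not> grim_win (grim_move (del_isolated (Gr A B C)) v)) \<or>
       (\<exists>v\<in>{1}\<times>B. \<not> grim_win (grim_move (del_isolated (Gr A B C)) v))) \<or>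
       (\<exists>v\<in>{2}\<times>C. \<not> grim_win (grim_move (del_isolated (Gr A B C)) v)))"
      by (simp only: gw fst_del True if_True fstGr bex_Un)
    then show ?thesis using e0 e1 e2 W_rec[OF less.prems(4), of "card B" "card C"] ok True by argo
  next
    case False
    have g: "\<not> grim_win (del_isolated (Gr A B C))"
      by (simp only: gw fst_del False if_False bex_empty not_False_eq_True)
    have "\<not> W (card A) (card B) (card C)" using W_rec[OF less.prems(4), of "card B" "card C"] ok False by blast
    then show ?thesis using g by blast
  qed
qed


lemma grimN_W: "grim_N (K3 1 m n) = W 1 m n"
proof -
  have "grim_N (K3 1 m n) = W (card {..<(1::nat)}) (card {..<m}) (card {..<n})"
    unfolding grim_N_def K3_Gr by (rule main) auto
  then show ?thesis by simp
qed

theorem lemma3p3: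
  fixes m n :: nat
  shows "(m = 1 \<longrightarrow> (grim_N (K3 1 m n) \<longleftrightarrow> even n))
       \<and> (m = 2 \<and> n \<ge> 2 \<longrightarrow> grim_N (K3 1 m n))
       \<and> (m \<ge> 3 \<and> n \<ge> 3 \<longrightarrow> (grim_N (K3 1 m n) \<longleftrightarrow> even (m + n)))"
  unfolding grimN_W by (simp add: W_def)

end
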